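(* Let $(L,\preceq)$ be a lattice and let $\mathrm{LCon}\,L$ be the set of all local congruences on $L$, ordered by inclusion $\sqsubseteq$. Then $(\mathrm{LCon}\,L,\sqsubseteq)$ is a complete lattice, whose least element is $\delta_\bot=\{(a,a)\mid a\in L\}$ and whose greatest element is $\delta_\top=\{(a,b)\mid a,b\in L\}$.
   Context: A local congruence on a lattice $(L,\preceq)$ is an equivalence relation on $L$ each of whose equivalence classes is a sublattice of $L$ and is convex (if $u,v$ are in the class and $u\preceq w\preceq v$, then $w$ is in the class). For equivalence relations $\rho_1,\rho_2$ on $L$, $\rho_1\sqsubseteq\rho_2$ means that every equivalence class of $\rho_1$ is contained in some equivalence class of $\rho_2$ (equivalently $\rho_1\subseteq\rho_2$ as sets of pairs). *)

theory Defs
  imports Main "HOL-Algebra.Complete_Lattice"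
begin

text \<open>The lattice L is the universe of a type of class lattice, ordered by the
class order. A local congruence is an equivalence relation on L each of whose
classes is a convex sublattice.\<close>

definition local_congruence :: "('a::lattice \<times> 'a) set \<Rightarrow> bool" where
  "local_congruence \<rho> \<longleftrightarrow>
     equiv UNIV \<rho> \<and>
     (\<forall>C \<in> UNIV // \<rho>.
        (\<forall>a\<in>C. \<forall>b\<in>C. inf a b \<in> C \<and> sup a b \<in> C) \<and>
        (\<forall>a\<in>C. \<forall>b\<in>C. \<forall>w. a \<le> w \<and> w \<le> b \<longrightarrow> w \<in> C))"

definition LCon :: "('a::lattice \<times> 'a) set set" where
  "LCon = {\<rho>. local_congruence \<rho>}"

definition LCon_order :: "('a::lattice \<times> 'a) set gorder" where
  "LCon_order = \<lparr>carrier = LCon, eq = (=), le = (\<subseteq>)\<rparr>"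

end

theory Submission
  imports Defs
begin

lemma lc_char:
  "local_congruence (\<rho>::('a::lattice \<times> 'a) set) \<longleftrightarrow> equiv UNIV \<rho> \<and>
    (\<forall>x a b. (x,a)\<in>\<rho> \<and> (x,b)\<in>\<rho> \<longrightarrow> (x, inf a b)\<in>\<rho> \<and> (x, sup a b)\<in>\<rho>
       \<and> (\<forall>w. a \<le> w \<and> w \<le> b \<longrightarrow> (x,w)\<in>\<rho>))" (is "?L \<longleftrightarrow> ?E \<and> ?R")
proof
  assume L: ?L
  then have E: ?E by (simp add: local_congruence_def)
  have R: ?R
  proof (intro allI impI)
    fix x a b
    assume h: "(x,a)\<in>\<rho> \<and> (x,b)\<in>\<rho>"
    have C: "\<rho>``{x} \<in> UNIV // \<rho>" by (rule quotientI) simp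
    have a: "a \<in> \<rho>``{x}" and b: "b \<in> \<rho>``{x}" using h by auto
    have P: "(\<forall>a\<in>\<rho>``{x}. \<forall>b\<in>\<rho>``{x}. inf a b \<in> \<rho>``{x} \<and> sup a b \<in> \<rho>``{x}) \<and>
        (\<forall>a\<in>\<rho>``{x}. \<forall>b\<in>\<rho>``{x}. \<forall>w. a \<le> w \<and> w \<le> b \<longrightarrow> w \<in> \<rho>``{x})"
      using L unfolding local_congruence_def by (rule conjunct2[THEN bspec, OF _ C])
    have 1: "inf a b \<in> \<rho>``{x}" using P[THEN conjunct1, rule_format, OF a b] by (rule conjunct1)
    have 2: "sup a b \<in> \<rho>``{x}" using P[THEN conjunct1, rule_format, OF a b] by (rule conjunct2)
    have 3: "\<forall>w. a \<le> w \<and> w \<le> b \<longrightarrow> w \<in> \<rho>``{x}"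
    proof (intro allI impI)
      fix w assume "a \<le> w \<and> w \<le> b"
      then show "w \<in> \<rho>``{x}" by (rule P[THEN conjunct2, rule_format, OF a b])
    qed
    show "(x, inf a b)\<in>\<rho> \<and> (x, sup a b)\<in>\<rho> \<and> (\<forall>w. a \<le> w \<and> w \<le> b \<longrightarrow> (x,w)\<in>\<rho>)"
      using 1 2 3 by simp
  qed
  show "?E \<and> ?R" by (rule conjI[OF E R])
next
  assume ER: "?E \<and> ?R"
  from ER have E: ?E by (rule conjunct1)
  from ER have R: ?R by (rule conjunct2)
  show ?L unfolding local_congruence_def
  proof (rule conjI[OF E], rule ballI, rule conjI)
    fix C assume "C \<in> UNIV // \<rho>"
    then obtain x where Cx: "C = \<rho>``{x}" by (auto elim: quotientE)
    show "\<forall>a\<in>C. \<forall>b\<in>C. inf a b \<in> C \<and> sup a b \<in> C"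
    proof (intro ballI)
      fix a b assume "a \<in> C" "b \<in> C"
      then have "(x,a)\<in>\<rho> \<and> (x,b)\<in>\<rho>" using Cx by simp
      then have "(x, inf a b)\<in>\<rho> \<and> (x, sup a b)\<in>\<rho>" using R by blast
      then show "inf a b \<in> C \<and> sup a b \<in> C" using Cx by simp
    qed
  next
    fix C assume "C \<in> UNIV // \<rho>"
    then obtain x where Cx: "C = \<rho>``{x}" by (auto elim: quotientE)
    show "\<forall>a\<in>C. \<forall>b\<in>C. \<forall>w. a \<le> w \<and> w \<le> b \<longrightarrow> w \<in> C"
    proof (intro ballI allI impI)
      fix a b w assume "a \<in> C" "b \<in> C" "a \<le> w \<and> w \<le> b"
      moreover from \<open>a \<in> C\<close> \<open>b \<in> C\<close> have "(x,a)\<in>\<rho> \<and> (x,b)\<in>\<rho>" using Cx by simp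
      ultimately have "(x, w)\<in>\<rho>" using R by blast
      then show "w \<in> C" using Cx by simp
    qed
  qed
qed

lemma lc_Inter:
  assumes "\<forall>r\<in>A. local_congruence (r::('a::lattice \<times> 'a) set)"
  shows "local_congruence (\<Inter>A)"
proof -
  have eA: "\<And>r. r \<in> A \<Longrightarrow> equiv UNIV r" using assms lc_char by blast
  have rA: "\<And>r x. r \<in> A \<Longrightarrow> (x,x) \<in> r" using eA by (simp add: equiv_def refl_on_def)
  have sA: "\<And>r x y. r \<in> A \<Longrightarrow> (x,y) \<in> r \<Longrightarrow> (y,x) \<in> r" using eA by (simp add: equiv_def sym_def)
  have tA: "\<And>r x y z. r \<in> A \<Longrightarrow> (x,y) \<in> r \<Longrightarrow> (y,z) \<in> r \<Longrightarrow> (x,z) \<in> r"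
    using eA by (simp add: equiv_def trans_def)
  have e: "equiv UNIV (\<Inter>A)"
  proof (rule equivI)
    show "refl (\<Inter>A)" unfolding refl_on_def using rA by auto
    show "sym (\<Inter>A)" unfolding sym_def using sA by auto
    show "trans (\<Inter>A)" unfolding trans_def using tA by (meson InterD InterI)
  qed simp
  show ?thesis unfolding lc_char
  proof (rule conjI[OF e], intro allI impI)
    fix x a b
    assume h: "(x,a)\<in>\<Inter>A \<and> (x,b)\<in>\<Inter>A"
    have c: "\<And>r. r \<in> A \<Longrightarrow> (x, inf a b)\<in>r \<and> (x, sup a b)\<in>r \<and> (\<forall>w. a \<le> w \<and> w \<le> b \<longrightarrow> (x,w)\<in>r)"
    proof -
      fix r assume r: "r \<in> A"
      then have "local_congruence r" using assms by blast
      then show "(x, inf a b)\<in>r \<and> (x, sup a b)\<in>r \<and> (\<forall>w. a \<le> w \<and> w \<le> b \<longrightarrow> (x,w)\<in>r)"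
        unfolding lc_char using h r by blast
    qed
    then show "(x, inf a b)\<in>\<Inter>A \<and> (x, sup a b)\<in>\<Inter>A \<and> (\<forall>w. a \<le> w \<and> w \<le> b \<longrightarrow> (x,w)\<in>\<Inter>A)"
      by blast
  qed
qed

lemma lc_top: "local_congruence (UNIV::('a::lattice \<times> 'a) set)"
  using lc_Inter[of "{}"] by simp

lemma lc_bot: "local_congruence (Id::('a::lattice \<times> 'a) set)"
  unfolding lc_char by (auto simp: equiv_def refl_on_def sym_def trans_def)

lemma po: "partial_order (LCon_order :: ('a::lattice \<times> 'a) set gorder)"
  by unfold_locales (auto simp: LCon_order_def)

theorem theorem5p2:
  shows "complete_lattice (LCon_order :: ('a::lattice \<times> 'a) set gorder)
    \<and> least (LCon_order :: ('a \<times> 'a) set gorder) {(a, a) | a::'a. True} LCon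
    \<and> greatest (LCon_order :: ('a \<times> 'a) set gorder) {(a, b) | (a::'a) (b::'a). True} LCon"
proof (intro conjI)
  have idc: "{(a, a) | a::'a. True} = Id" by auto
  have unc: "{(a, b) | (a::'a) (b::'a). True} = UNIV" by auto
  have G: "greatest (LCon_order :: ('a \<times> 'a) set gorder) UNIV LCon"
    unfolding greatest_def LCon_order_def LCon_def using lc_top by auto
  then show "greatest (LCon_order :: ('a \<times> 'a) set gorder) {(a, b) | (a::'a) (b::'a). True} LCon"
    by (simp add: unc)
  show "least (LCon_order :: ('a \<times> 'a) set gorder) {(a, a) | a::'a. True} LCon"
    unfolding idc least_def LCon_order_def LCon_def using lc_bot
    by (auto simp: lc_char equiv_def refl_on_def)
  show "complete_lattice (LCon_order :: ('a::lattice \<times> 'a) set gorder)"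
  proof (rule partial_order.complete_lattice_criterion1[OF po])
    show "\<exists>g. greatest (LCon_order :: ('a \<times> 'a) set gorder) g (carrier LCon_order)"
      using G by (auto simp: LCon_order_def)
  next
    fix A :: "('a \<times> 'a) set set"
    assume "A \<subseteq> carrier LCon_order" "A \<noteq> {}"
    then have A: "\<forall>r\<in>A. local_congruence r" by (auto simp: LCon_order_def LCon_def)
    show "\<exists>i. greatest LCon_order i (Lower LCon_order A)"
      apply (rule exI[of _ "\<Inter>A"])
      using lc_Inter[OF A] A
      by (auto simp: greatest_def Lower_def LCon_order_def LCon_def)
  qed
qed

end
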